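(* Let $G=(g_{ij})$ be a Hermitian $4\times4$ matrix with $g_{ii}=0$, $g_{12}=g_{23}=g_{34}=1$, $|g_{13}|=1$, $g_{14}\ne0$, $g_{24}\ne0$ and $\det G=0$. If $\mathrm{Re}(g_{13})\le0$ and $\mathrm{Re}(g_{24}\overline{g}_{14})\le0$, then $\mathrm{Re}(g_{13}\overline{g}_{14})\le0$ and $\mathrm{Re}(\overline{g}_{24})\le0$. *)

theory Defs
  imports "HOL-Analysis.Analysis" "HOL-Library.Numeral_Type"
begin

definition hermitian_mat :: "complex^'n^'n \<Rightarrow> bool" where
  "hermitian_mat G \<longleftrightarrow> (\<forall>i j. G $ i $ j = cnj (G $ j $ i))"

end

theory Submission imports Defs begin
lemma det_4:
  "det (A::'a::comm_ring_1^4^4) = A$1$1 * A$2$2 * A$3$3 * A$4$4 - A$1$1 * A$2$2 * A$3$4 * A$4$3 - A$1$1 * A$2$3 * A$3$2 * A$4$4 + A$1$1 * A$2$3 * A$3$4 * A$4$2 + A$1$1 * A$2$4 * A$3$2 * A$4$3 - A$1$1 * A$2$4 * A$3$3 * A$4$2 - A$1$2 * A$2$1 * A$3$3 * A$4$4 + A$1$2 * A$2$1 * A$3$4 * A$4$3 + A$1$2 * A$2$3 * A$3$1 * A$4$4 - A$1$2 * A$2$3 * A$3$4 * A$4$1 - A$1$2 * A$2$4 * A$3$1 * A$4$3 + A$1$2 * A$2$4 * A$3$3 * A$4$1 + A$1$3 * A$2$1 * A$3$2 * A$4$4 - A$1$3 * A$2$1 * A$3$4 * A$4$2 - A$1$3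 * A$2$2 * A$3$1 * A$4$4 + A$1$3 * A$2$2 * A$3$4 * A$4$1 + A$1$3 * A$2$4 * A$3$1 * A$4$2 - A$1$3 * A$2$4 * A$3$2 * A$4$1 - A$1$4 * A$2$1 * A$3$2 * A$4$3 + A$1$4 * A$2$1 * A$3$3 * A$4$2 + A$1$4 * A$2$2 * A$3$1 * A$4$3 - A$1$4 * A$2$2 * A$3$3 * A$4$1 - A$1$4 * A$2$3 * A$3$1 * A$4$2 + A$1$4 * A$2$3 * A$3$2 * A$4$1"
proof -
  have f1: "finite {2::4, 3, 4}" "1 \<notin> {2::4, 3, 4}" by auto
  have f2: "finite {3::4, 4}" "2 \<notin> {3::4, 4}" by auto
  have f3: "finite {4::4}" "3 \<notin> {4::4}" by auto
  show ?thesis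
    unfolding det_def UNIV_4
    unfolding sum_over_permutations_insert[OF f1]
    unfolding sum_over_permutations_insert[OF f2]
    unfolding sum_over_permutations_insert[OF f3]
    unfolding permutes_sing
    by (simp add: sign_swap_id permutation_swap_id sign_compose permutation_compose sign_id swap_id_eq algebra_simps)
qed

lemma real_core:
  fixes a1 a2 b1 b2 c1 c2 :: real
  assumes na: "a1^2 + a2^2 = 1"
    and key: "(b1 - 1 - (a1*c1 - a2*c2))^2 + (b2 - (a1*c2 + a2*c1))^2 = 4*a1*c1"
    and ra: "a1 \<le> 0" and rcb: "c1*b1 + c2*b2 \<le> 0"
  shows "a1*b1 + a2*b2 \<le> 0 \<and> c1 \<le> 0"
proof -
  define r1 where "r1 = b1 - 1 - (a1*c1 - a2*c2)"
  define r2 where "r2 = b2 - (a1*c2 + a2*c1)"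
  have key': "r1^2 + r2^2 = 4*a1*c1" using key r1_def r2_def by simp
  have c: "c1 \<le> 0"
  proof (rule ccontr)
    assume "\<not> c1 \<le> 0"
    hence cp: "c1 > 0" by simp
    have "4*a1*c1 \<le> 0" using ra cp by (simp add: mult_nonpos_nonneg)
    moreover have "r1^2 + r2^2 \<ge> 0" by simp
    ultimately have z: "r1^2 + r2^2 = 0" "a1*c1 = 0" using key' by linarith+
    hence "r1 = 0" "r2 = 0" by (simp_all add: sum_power2_eq_zero_iff)
    moreover have "a1 = 0" using z cp by simp
    ultimately have "b1 = 1 - a2*c2" "b2 = a2*c1" using r1_def r2_def by simp_all
    hence "c1*b1 + c2*b2 = c1*(1 - a2*c2) + c2*(a2*c1)" by simp
    also have "\<dots> = c1" by (simp add: algebra_simps)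
    finally have "c1*b1 + c2*b2 = c1" .
    thus False using rcb cp by simp
  qed
  have ar0: "a1*b1 + a2*b2 = a1 + (a1^2+a2^2)*c1 + (a1*r1 + a2*r2)"
    unfolding r1_def r2_def by (simp add: algebra_simps power2_eq_square)
  have ar: "a1*b1 + a2*b2 = a1 + c1 + (a1*r1 + a2*r2)" using ar0 na by simp
  have cs0: "(a1^2+a2^2)*(r1^2+r2^2) - (a1*r1 + a2*r2)^2 = (a1*r2 - a2*r1)^2"
    by (simp add: algebra_simps power2_eq_square)
  have cs: "(a1*r1 + a2*r2)^2 \<le> (a1^2+a2^2)*(r1^2+r2^2)"
    using cs0 zero_le_power2[of "a1*r2 - a2*r1"] by linarith
  hence "(a1*r1 + a2*r2)^2 \<le> 4*a1*c1" using na key' by simp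
  also have "\<dots> \<le> (-(a1 + c1))^2"
    using zero_le_power2[of "a1 - c1"] unfolding power2_minus power2_sum power2_diff by linarith
  finally have "(a1*r1 + a2*r2)^2 \<le> (-(a1+c1))^2" .
  hence "a1*r1 + a2*r2 \<le> -(a1+c1)"
    by (rule power2_le_imp_le) (use ra c in linarith)
  thus ?thesis using ar c by linarith
qed
theorem corollary3p1:
  fixes G :: "complex^4^4"
  assumes herm: "hermitian_mat G"
    and diag: "\<forall>i. G $ i $ i = 0"
    and g12: "G $ 1 $ 2 = 1" and g23: "G $ 2 $ 3 = 1" and g34: "G $ 3 $ 4 = 1"
    and g13: "cmod (G $ 1 $ 3) = 1"
    and g14: "G $ 1 $ 4 \<noteq> 0" and g24: "G $ 2 $ 4 \<noteq> 0"
    and detG: "det G = 0"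
    and re13: "Re (G $ 1 $ 3) \<le> 0"
    and re2414: "Re (G $ 2 $ 4 * cnj (G $ 1 $ 4)) \<le> 0"
  shows "Re (G $ 1 $ 3 * cnj (G $ 1 $ 4)) \<le> 0 \<and> Re (cnj (G $ 2 $ 4)) \<le> 0"
proof -
  obtain a1 a2 where ha: "G $ 1 $ 3 = Complex a1 a2" by (metis complex.exhaust)
  obtain b1 b2 where hb: "G $ 1 $ 4 = Complex b1 b2" by (metis complex.exhaust)
  obtain c1 c2 where hc: "G $ 2 $ 4 = Complex c1 c2" by (metis complex.exhaust)
  have h: "G $ j $ i = cnj (G $ i $ j)" for i j using herm unfolding hermitian_mat_def by blast
  have e21: "G $ 2 $ 1 = 1" using h[of 2 1] g12 by simp
  have e32: "G $ 3 $ 2 = 1" using h[of 3 2] g23 by simp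
  have e43: "G $ 4 $ 3 = 1" using h[of 4 3] g34 by simp
  have d: "G $ 1 $ 1 = 0" "G $ 2 $ 2 = 0" "G $ 3 $ 3 = 0" "G $ 4 $ 4 = 0" using diag by auto
  have "Re (det G) = 0" using detG by simp
  hence R: "Re (det G) = 0" .
  have na: "a1^2 + a2^2 = 1" using g13 ha by (simp add: complex_norm)
  define a where "a = G $ 1 $ 3"
  define b where "b = G $ 1 $ 4"
  define c where "c = G $ 2 $ 4"
  have D: "det G = 1 - cnj b - c * cnj a - a * cnj c + a * c * cnj a * cnj c - a * c * cnj b
       - b - b * cnj a * cnj c + b * cnj b"
    unfolding det_4 a_def b_def c_def using e21 e32 e43 d g12 g23 g34 h[of 1 3] h[of 1 4] h[of 2 4]
    by simp
  have RE: "Re (det G) = 1 - b1 - (c1*a1+c2*a2) - (a1*c1+a2*c2) + (a1^2+a2^2)*(c1^2+c2^2)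
     - (b1*(a1*c1 - a2*c2) + b2*(a1*c2+a2*c1)) - b1 - (b1*(a1*c1 - a2*c2) + b2*(a1*c2+a2*c1)) + (b1^2+b2^2)"
    unfolding D a_def b_def c_def ha hb hc by (simp add: algebra_simps power2_eq_square)
  have key: "(b1 - 1 - (a1*c1 - a2*c2))^2 + (b2 - (a1*c2 + a2*c1))^2 = 4*a1*c1"
  proof -
    have "(b1 - 1 - (a1*c1 - a2*c2))^2 + (b2 - (a1*c2 + a2*c1))^2 - 4*a1*c1
        = Re (det G) + (a1^2+a2^2-1)*(c1^2+c2^2) - (a1^2+a2^2-1)*(c1^2+c2^2)"
      unfolding RE by (simp add: algebra_simps power2_eq_square)
    thus ?thesis using R na by simp
  qed
  have "a1 \<le> 0" using re13 ha by simp
  moreover have "c1*b1 + c2*b2 \<le> 0" using re2414 hb hc by simp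
  ultimately have "a1*b1 + a2*b2 \<le> 0 \<and> c1 \<le> 0" using real_core na key by blast
  thus ?thesis using ha hb hc by simp
qed
end
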